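(* Let $W, W' \in \mathcal{D}_1$ with $W = LW'R$ and $W = \begin{pmatrix} a & b \\ c & d\end{pmatrix}$. Then \[ \sigma(W) = 2\left\lfloor \frac{\xi(a,c)}{2}\right\rfloor + 2. \]
   Context: $L = \begin{pmatrix} 1 & 0 \\ 1 & 1\end{pmatrix}$, $R = \begin{pmatrix} 1 & 1 \\ 0 & 1\end{pmatrix}$. $\mathcal{D}_1$ is the set of $2\times 2$ nonnegative integer matrices of determinant $1$; the map sending a word over $\{L,R\}$ to the product of the corresponding matrices is an isomorphism of $\{L,R\}^*$ onto $\mathcal{D}_1$, so elements of $\mathcal{D}_1$ are identified with words over $\{L,R\}$. For a finite word $V$, a run is a maximal block of consecutive equal letters, and $\sigma(V)$ is the number of runs of $V$ (e.g. $\sigma(LLRRRRL)=3$). For nonnegative integers $a,c$ not both zero, $\xi(a,c)$ is the number of divisions performed by the Euclidean algorithm computing $\gcd(a,c)$ (ending when $0$ is reached), e.g. $\xi(7,0)=0$, $\xi(7,1)=\xi(1,7)=1$, $\xi(13,5)=4$. *)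

theory Defs
  imports Main
begin

datatype letter = L | R

text \<open>A 2x2 matrix (a b; c d) is represented by the tuple (a, b, c, d).\<close>
type_synonym mat2 = "nat \<times> nat \<times> nat \<times> nat"

fun mmul :: "mat2 \<Rightarrow> mat2 \<Rightarrow> mat2" where
  "mmul (a, b, c, d) (e, f, g, h) = (a*e + b*g, a*f + b*h, c*e + d*g, c*f + d*h)"

definition mat_id :: mat2 where "mat_id = (1, 0, 0, 1)"

fun letter_mat :: "letter \<Rightarrow> mat2" where
  "letter_mat L = (1, 0, 1, 1)"
| "letter_mat R = (1, 1, 0, 1)"

definition word_mat :: "letter list \<Rightarrow> mat2" where
  "word_mat w = foldr (\<lambda>x M. mmul (letter_mat x) M) w mat_id"

definition sigma :: "'a list \<Rightarrow> nat" where
  "sigma w = length (remdups_adj w)"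

function xi :: "nat \<Rightarrow> nat \<Rightarrow> nat" where
  "xi a c = (if a = 0 \<or> c = 0 then 0
             else 1 + xi (min a c) (max a c mod min a c))"
  by auto
termination
  by (relation "measure (\<lambda>(a, c). a + c)") (auto simp: min_def max_def intro: order.strict_trans2[OF mod_less_divisor])

end

theory Submission
  imports Defs
begin

declare xi.simps[simp del]

fun col :: "letter list \<Rightarrow> nat \<times> nat" where
  "col [] = (1, 0)"
| "col (L # w) = (case col w of (x, y) \<Rightarrow> (x, x + y))"
| "col (R # w) = (case col w of (x, y) \<Rightarrow> (x + y, y))"

lemma word_mat_col: "(case word_mat w of (a, b, c, d) \<Rightarrow> (a, c)) = col w"
proof (induction w)
  case Nil
  then show ?case by (simp add: word_mat_def mat_id_def)
next
  case (Cons l w)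
  obtain a b c d where e: "word_mat w = (a, b, c, d)" by (cases "word_mat w") auto
  have wm: "\<And>l. word_mat (l # w) = mmul (letter_mat l) (word_mat w)"
    by (simp add: word_mat_def)
  show ?case using Cons e by (cases l) (auto simp: wm e simp flip: Cons.IH)
qed

lemma col_rep: "col (replicate j R) = (1, 0)"
  by (induction j) auto

lemma col_app: "col (U @ replicate j R) = col U"
proof (induction U)
  case Nil then show ?case by (simp add: col_rep)
next
  case (Cons l U) then show ?case by (cases l) auto
qed

lemma xi0: "xi y 0 = 0"
  by (subst xi.simps) simp

lemma xi_sym: "xi x y = xi y x"
  by (subst (1 2) xi.simps) (simp add: min.commute max.commute)

lemma xi_le: "0 < x \<Longrightarrow> x \<le> y \<Longrightarrow> xi x y = 1 + xi x (y mod x)"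
  by (subst xi.simps) (simp add: min_def max_def)

lemma xi_gt: "0 < y \<Longrightarrow> y < x \<Longrightarrow> xi x y = 1 + xi y (x mod y)"
  by (subst xi.simps) (simp add: min_def max_def)

lemma sigma_cons2: "sigma (a # b # V) = (if a = b then sigma (b # V) else sigma (b # V) + 1)"
  by (simp add: sigma_def)

lemma inv:
  "U \<noteq> [] \<Longrightarrow> last U = L \<Longrightarrow> (case col U of (x, y) \<Rightarrow> x \<ge> 1 \<and> y \<ge> 1 \<and>
     (hd U = L \<longrightarrow> x \<le> y) \<and> (hd U = R \<longrightarrow> y < x) \<and> (x = y \<longrightarrow> sigma U \<le> 1) \<and>
     sigma U \<le> xi x y + 1 \<and> xi x y \<le> sigma U \<and> (odd (sigma U) \<longleftrightarrow> hd U = L))"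
proof (induction U)
  case Nil then show ?case by simp
next
  case (Cons a V)
  show ?case
  proof (cases V)
    case Nil
    then have "a = L" using Cons by simp
    then show ?thesis using Nil by (simp add: sigma_def xi_le xi0)
  next
    case (Cons b V')
    obtain x y where cv: "col V = (x, y)" by (cases "col V") auto
    have IH: "x \<ge> 1 \<and> y \<ge> 1 \<and>
     (hd V = L \<longrightarrow> x \<le> y) \<and> (hd V = R \<longrightarrow> y < x) \<and> (x = y \<longrightarrow> sigma V \<le> 1) \<and>
     sigma V \<le> xi x y + 1 \<and> xi x y \<le> sigma V \<and> (odd (sigma V) \<longleftrightarrow> hd V = L)"
      using Cons.IH Cons.prems cv \<open>V = b # V'\<close> by simp
    have sg: "sigma (a # V) = (if a = hd V then sigma V else sigma V + 1)"
      using \<open>V = b # V'\<close> sigma_cons2[of a b V'] by simp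
    show ?thesis
    proof (cases a; cases "hd V")
      assume "a = L" "hd V = L"
      then have "xi x (x + y) = xi x y" using IH xi_le[of x y] xi_le[of x "x+y"] by simp
      then show ?thesis using IH sg cv \<open>a = L\<close> \<open>hd V = L\<close> by simp
    next
      assume "a = L" "hd V = R"
      then have "xi x (x + y) = 1 + xi x y" using IH xi_le[of x "x+y"] by simp
      then show ?thesis using IH sg cv \<open>a = L\<close> \<open>hd V = R\<close> by auto
    next
      assume "a = R" "hd V = R"
      then have "xi (x + y) y = xi x y" using IH xi_gt[of y x] xi_gt[of y "x+y"] by simp
      then show ?thesis using IH sg cv \<open>a = R\<close> \<open>hd V = R\<close> by simp
    next
      assume "a = R" "hd V = L"
      show ?thesis
      proof (cases "x = y")
        case True
        then have "xi (x + y) y = 1" using IH xi_gt[of y "x+y"] by (simp add: xi0)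
        moreover have "xi x y = 1" using True IH xi_le[of x y] by (simp add: xi0)
        ultimately show ?thesis using IH sg cv \<open>a = R\<close> \<open>hd V = L\<close> True by auto
      next
        case False
        then have "xi (x + y) y = 1 + xi x y"
          using IH xi_gt[of y "x+y"] xi_sym[of y x] \<open>hd V = L\<close> by simp
        then show ?thesis using IH sg cv \<open>a = R\<close> \<open>hd V = L\<close> False by auto
      qed
    qed
  qed
qed

lemma decomp: "L \<in> set xs \<Longrightarrow> \<exists>U j. xs = U @ replicate j R \<and> U \<noteq> [] \<and> last U = L"
proof (induction xs rule: rev_induct)
  case Nil then show ?case by simp
next
  case (snoc x ys)
  show ?case
  proof (cases x)
    case L then show ?thesis by (intro exI[of _ "ys @ [x]"] exI[of _ 0]) auto
  next
    case R
    then have "L \<in> set ys" using snoc.prems by auto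
    then obtain U j where "ys = U @ replicate j R" "U \<noteq> []" "last U = L" using snoc.IH by blast
    then show ?thesis using R
      by (intro exI[of _ U] exI[of _ "Suc j"]) (simp add: replicate_append_same[symmetric])
  qed
qed

theorem lemma12:
  fixes W W' :: "letter list" and a b c d :: nat
  assumes "W = [L] @ W' @ [R]"
    and "word_mat W = (a, b, c, d)"
  shows "sigma W = 2 * (xi a c div 2) + 2"
proof -
  obtain U j where d: "W = U @ replicate j R" "U \<noteq> []" "last U = L"
    using decomp[of W] assms(1) by auto
  have "j \<noteq> 0" using d assms(1) by (cases "j = 0") (auto simp: last_append)
  have hU: "hd U = L" using d assms(1) by (cases U) auto
  have cw: "col W = (a, c)" using word_mat_col[of W] assms(2) by simp
  have cU: "col U = (a, c)" using cw d col_app by simp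
  have "sigma W = sigma U + 1"
    using d \<open>j \<noteq> 0\<close> by (simp add: sigma_def remdups_adj_append' remdups_adj_replicate)
  moreover have "sigma U \<le> xi a c + 1 \<and> xi a c \<le> sigma U \<and> odd (sigma U)"
    using inv[OF d(2) d(3)] cU hU by simp
  ultimately show ?thesis by presburger
qed

end
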